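(* Let $n\ge2$ and let $\xi_n:S^1\to M_n(\mathbb C)$ be the continuous function whose $(i,j)$ entry ($1\le i,j\le n$) is $\xi_n(z)_{ij}=z^{j-i}$. Then $\xi_n$ is a positive element of $C(S^1)^{(n)}\otimes_{\min}C(S^1)$ which is entangled: there do not exist $k\in\mathbb N$, positive semidefinite Toeplitz matrices $t_1,\dots,t_k\in C(S^1)^{(n)}$ and positive functions $f_1,\dots,f_k\in C(S^1)$ with $\xi_n=\sum_{j=1}^k t_j\otimes f_j$.
   Context: $S^1$ is the unit circle, $C(S^1)$ the C$^*$-algebra of continuous complex functions on it. $C(S^1)^{(n)}\subseteq M_n(\mathbb C)$ is the operator system of Toeplitz matrices $[\tau_{k-\ell}]$. $C(S^1)^{(n)}\otimes_{\min}C(S^1)$ is identified with the continuous functions $S^1\to C(S^1)^{(n)}$, with $t\otimes f$ corresponding to $z\mapsto f(z)t$, and an element is positive iff its value at each $z\in S^1$ is positive semidefinite. A positive element is separable if it is a finite sum of tensors of positive elements, and entangled otherwise. *)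

theory Defs
  imports "HOL-Analysis.Analysis"
begin

text \<open>n x n complex matrices are represented as functions nat => nat => complex,
  with entries read only for indices 0 <= i, j < n (0-based indexing;
  the entry (i,j) of the paper corresponds to (i-1,j-1) here).\<close>

type_synonym cmat = "nat \<Rightarrow> nat \<Rightarrow> complex"

abbreviation S1 :: "complex set" where "S1 \<equiv> sphere 0 1"

text \<open>Toeplitz matrices [tau_(k-l)]: membership in C(S^1)^(n).\<close>
definition toeplitz :: "nat \<Rightarrow> cmat \<Rightarrow> bool" where
  "toeplitz n t \<longleftrightarrow> (\<exists>\<tau> :: int \<Rightarrow> complex. \<forall>k<n. \<forall>l<n. t k l = \<tau> (int k - int l))"

definition psd :: "nat \<Rightarrow> cmat \<Rightarrow> bool" where
  "psd n t \<longleftrightarrow> (\<forall>v :: nat \<Rightarrow> complex.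
     let q = (\<Sum>i<n. \<Sum>j<n. cnj (v i) * t i j * v j) in Im q = 0 \<and> Re q \<ge> 0)"

definition pos_toeplitz :: "nat \<Rightarrow> cmat \<Rightarrow> bool" where
  "pos_toeplitz n t \<longleftrightarrow> toeplitz n t \<and> psd n t"

definition pos_fun :: "(complex \<Rightarrow> complex) \<Rightarrow> bool" where
  "pos_fun f \<longleftrightarrow> continuous_on S1 f \<and> (\<forall>z\<in>S1. Im (f z) = 0 \<and> Re (f z) \<ge> 0)"

text \<open>Elements of C(S^1)^(n) (x)_min C(S^1), viewed as continuous functions S^1 -> C(S^1)^(n).\<close>
definition in_tensor :: "nat \<Rightarrow> (complex \<Rightarrow> cmat) \<Rightarrow> bool" where
  "in_tensor n F \<longleftrightarrow> (\<forall>i<n. \<forall>j<n. continuous_on S1 (\<lambda>z. F z i j)) \<and> (\<forall>z\<in>S1. toeplitz n (F z))"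

definition pos_tensor :: "nat \<Rightarrow> (complex \<Rightarrow> cmat) \<Rightarrow> bool" where
  "pos_tensor n F \<longleftrightarrow> in_tensor n F \<and> (\<forall>z\<in>S1. psd n (F z))"

text \<open>Separable: a finite sum of tensors t_j (x) f_j of positive elements, where
  t (x) f corresponds to z |-> f(z) t; equality as functions on S^1.\<close>
definition separable :: "nat \<Rightarrow> (complex \<Rightarrow> cmat) \<Rightarrow> bool" where
  "separable n F \<longleftrightarrow> (\<exists>(k::nat) (t :: nat \<Rightarrow> cmat) (f :: nat \<Rightarrow> complex \<Rightarrow> complex).
     (\<forall>j<k. pos_toeplitz n (t j) \<and> pos_fun (f j)) \<and>
     (\<forall>z\<in>S1. \<forall>a<n. \<forall>b<n. F z a b = (\<Sum>j<k. f j z * t j a b)))"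

definition entangled :: "nat \<Rightarrow> (complex \<Rightarrow> cmat) \<Rightarrow> bool" where
  "entangled n F \<longleftrightarrow> pos_tensor n F \<and> \<not> separable n F"

definition xi :: "complex \<Rightarrow> cmat" where
  "xi z i j = z powi (int j - int i)"

end

theory Submission imports Defs "HOL-Computational_Algebra.Polynomial" begin

lemma sum_two:
  fixes g :: "nat \<Rightarrow> 'a::comm_monoid_add"
  assumes "n \<ge> 2" "\<And>i. i \<ge> 2 \<Longrightarrow> g i = 0"
  shows "(\<Sum>i<n. g i) = g 0 + g 1"
proof -
  have "(\<Sum>i<n. g i) = (\<Sum>i\<in>{0,1}. g i)"
    by (rule sum.mono_neutral_right) (use assms in auto)
  then show ?thesis by simp
qed

definition uw :: "complex \<Rightarrow> nat \<Rightarrow> complex" where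
  "uw w i = (if i = 0 then 1 else if i = 1 then - cnj w else 0)"

definition Q :: "cmat \<Rightarrow> complex \<Rightarrow> complex" where
  "Q t w = t 0 0 - t 0 1 * cnj w - w * t 1 0 + w * cnj w * t 1 1"

lemma quad_uw:
  assumes "n \<ge> 2"
  shows "(\<Sum>i<n. \<Sum>j<n. cnj (uw w i) * t i j * uw w j) = Q t w"
proof -
  have "(\<Sum>i<n. \<Sum>j<n. cnj (uw w i) * t i j * uw w j)
     = (\<Sum>i<n. cnj (uw w i) * t i 0 * uw w 0 + cnj (uw w i) * t i 1 * uw w 1)"
    by (rule sum.cong[OF refl], rule sum_two[OF assms]) (simp add: uw_def)
  also have "\<dots> = (cnj (uw w 0) * t 0 0 * uw w 0 + cnj (uw w 0) * t 0 1 * uw w 1)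
      + (cnj (uw w 1) * t 1 0 * uw w 0 + cnj (uw w 1) * t 1 1 * uw w 1)"
    by (rule sum_two[OF assms]) (simp add: uw_def)
  also have "\<dots> = Q t w" by (simp add: uw_def Q_def algebra_simps)
  finally show ?thesis .
qed

lemma psd_Q:
  assumes "n \<ge> 2" "psd n t"
  shows "Im (Q t w) = 0 \<and> Re (Q t w) \<ge> 0"
  using assms(2) unfolding psd_def Let_def
  by (metis quad_uw[OF assms(1)])

lemma S1_cnj: "z \<in> S1 \<Longrightarrow> z * cnj z = 1"
  by (metis complex_norm_square mem_sphere_0 of_real_1 power_one)

lemma xi_pos:
  assumes "n \<ge> 2"
  shows "pos_tensor n xi"
proof -
  have cont: "continuous_on S1 (\<lambda>z. xi z i j)" for i j
    unfolding xi_def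
    by (intro continuous_intros) auto
  have toe: "toeplitz n (xi z)" for z
    unfolding toeplitz_def xi_def
    by (rule exI[of _ "\<lambda>d. z powi (- d)"]) auto
  have psd: "psd n (xi z)" if z: "z \<in> S1" for z
  proof -
    have z0: "z \<noteq> 0" using z by auto
    have c: "cnj (z powi m) = z powi (- m)" for m
    proof -
      have "cnj z = inverse z" using S1_cnj[OF z] z0 by (simp add: field_simps)
      then show ?thesis by (simp add: power_int_minus power_int_inverse)
    qed
    show ?thesis unfolding psd_def Let_def
    proof
      fix v :: "nat \<Rightarrow> complex"
      define S where "S = (\<Sum>j<n. z powi (int j) * v j)"
      have "(\<Sum>i<n. \<Sum>j<n. cnj (v i) * xi z i j * v j) =
            (\<Sum>i<n. \<Sum>j<n. cnj (z powi int i * v i) * (z powi int j * v j))"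
      proof (rule sum.cong[OF refl], rule sum.cong[OF refl])
        fix i j
        have "xi z i j = z powi (int j + - int i)" by (simp add: xi_def)
        also have "\<dots> = z powi int j * z powi (- int i)"
          using z0 by (rule power_int_add[OF disjI1])
        finally have xe: "xi z i j = z powi int j * z powi (- int i)" .
        have ci: "cnj (z powi int i) = z powi (- int i)" by (rule c)
        show "cnj (v i) * xi z i j * v j = cnj (z powi int i * v i) * (z powi int j * v j)"
          unfolding xe complex_cnj_mult ci by (simp only: mult_ac)
      qed
      also have "\<dots> = cnj S * S"
        unfolding S_def cnj_sum sum_product ..
      also have "cnj S * S = of_real ((cmod S)^2)"
        by (metis complex_norm_square mult.commute of_real_power)
      finally show "Im (\<Sum>i<n. \<Sum>j<n. cnj (v i) * xi z i j * v j) = 0 \<and>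
        0 \<le> Re (\<Sum>i<n. \<Sum>j<n. cnj (v i) * xi z i j * v j)" by simp
    qed
  qed
  show ?thesis unfolding pos_tensor_def in_tensor_def using cont toe psd by auto
qed


lemma S1_infinite:
  assumes "d > 0"
  shows "infinite {w. w \<in> S1 \<and> dist w 1 < d}"
proof
  assume fin: "finite {w. w \<in> S1 \<and> dist w 1 < d}"
  define x0 where "x0 = max 0 (1 - d^2/2)"
  have x0: "x0 < 1" "0 \<le> x0" using assms by (auto simp: x0_def)
  define g where "g x = Complex x (sqrt (1 - x^2))" for x
  have "g ` {x0<..<1} \<subseteq> {w. w \<in> S1 \<and> dist w 1 < d}"
  proof
    fix w assume "w \<in> g ` {x0<..<1}"
    then obtain x where x: "x0 < x" "x < 1" and w: "w = g x" by auto
    have x2: "x^2 \<le> 1" using x x0 by (simp add: abs_square_le_1)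
    have nw: "cmod w = 1" using x2 by (simp add: w g_def cmod_def)
    have "(dist w 1)^2 = (x - 1)^2 + (1 - x^2)"
      using x2 by (simp add: w g_def dist_norm cmod_def)
    also have "\<dots> = 2 - 2 * x" by (simp add: power2_eq_square algebra_simps)
    also have "\<dots> < d^2" using x unfolding x0_def by auto
    finally have "dist w 1 < d" using assms by (simp add: power_less_imp_less_base)
    then show "w \<in> {w. w \<in> S1 \<and> dist w 1 < d}" using nw by simp
  qed
  moreover have "inj_on g {x0<..<1}"
    by (rule inj_onI) (simp add: g_def complex_eq_iff)
  ultimately have "finite {x0<..<(1::real)}"
    using fin finite_subset finite_imageD by metis
  then show False using x0 infinite_Ioo[of x0 1] by simp
qed

lemma not_sep:
  assumes n: "n \<ge> 2"
  shows "\<not> separable n xi"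
proof
  assume "separable n xi"
  then obtain k :: nat and t :: "nat \<Rightarrow> cmat" and f :: "nat \<Rightarrow> complex \<Rightarrow> complex" where tf0: "\<forall>j<k. pos_toeplitz n (t j) \<and> pos_fun (f j)"
    and eq0: "\<forall>z\<in>S1. \<forall>a<n. \<forall>b<n. xi z a b = (\<Sum>j<k. f j z * t j a b)"
    unfolding separable_def by blast
  have tf: "\<And>j. j < k \<Longrightarrow> pos_toeplitz n (t j) \<and> pos_fun (f j)" using tf0 by blast
  have eq: "\<And>z a b. z \<in> S1 \<Longrightarrow> a < n \<Longrightarrow> b < n \<Longrightarrow> xi z a b = (\<Sum>j<k. f j z * t j a b)"
    using eq0 by blast
  have Qsum: "Q (xi z) w = (\<Sum>j<k. f j z * Q (t j) w)" if z: "z \<in> S1" for z w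
  proof -
    have "Q (xi z) w = Q (\<lambda>a b. \<Sum>j<k. f j z * t j a b) w"
      unfolding Q_def using eq[OF z] n by simp
    also have "\<dots> = (\<Sum>j<k. f j z * Q (t j) w)"
      unfolding Q_def by (simp add: sum_distrib_left sum_subtractf sum.distrib algebra_simps)
    finally show ?thesis .
  qed
  have Qxi: "Q (xi z) z = 0" if z: "z \<in> S1" for z
  proof -
    have z0: "z \<noteq> 0" using z by auto
    have "cnj z = inverse z" using S1_cnj[OF z] z0 by (simp add: field_simps)
    then show ?thesis using S1_cnj[OF z] z0 unfolding Q_def xi_def
      by (simp add: power_int_minus)
  qed
  have zero: "f j w = 0 \<or> Q (t j) w = 0" if j: "j < k" and w: "w \<in> S1" for j w
  proof -
    have nn: "Im (f i w * Q (t i) w) = 0 \<and> Re (f i w * Q (t i) w) \<ge> 0" if "i < k" for i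
    proof -
      have "Im (f i w) = 0 \<and> Re (f i w) \<ge> 0" using tf[OF that] w unfolding pos_fun_def by auto
      moreover have "Im (Q (t i) w) = 0 \<and> Re (Q (t i) w) \<ge> 0"
        using tf[OF that] psd_Q[OF n] unfolding pos_toeplitz_def by auto
      ultimately show ?thesis by simp
    qed
    have "(\<Sum>i<k. Re (f i w * Q (t i) w)) = 0"
      using Qsum[OF w, of w] Qxi[OF w] by (metis Re_sum zero_complex.sel(1))
    then have "\<forall>i\<in>{..<k}. Re (f i w * Q (t i) w) = 0"
      using sum_nonneg_eq_0_iff[of "{..<k}" "\<lambda>i. Re (f i w * Q (t i) w)"] nn by auto
    then have "f j w * Q (t j) w = 0" using nn[OF j] j by (simp add: complex_eq_iff)
    then show ?thesis by simp
  qed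
  have one: "(1::complex) \<in> S1" by simp
  have "(\<Sum>j<k. f j 1 * t j 0 0) = xi 1 0 0" using eq[OF one, of 0 0] n by simp
  also have "\<dots> = 1" by (simp add: xi_def)
  finally obtain j where j: "j < k" and nz: "f j 1 * t j 0 0 \<noteq> 0"
    by (metis (no_types, lifting) lessThan_iff one_neq_zero sum.neutral)
  have fj1: "f j 1 \<noteq> 0" and a0: "t j 0 0 \<noteq> 0" using nz by auto
  have pf: "pos_fun (f j)" and pt: "pos_toeplitz n (t j)" using tf[OF j] by auto
  have "Re (f j 1) > 0"
    using pf fj1 unfolding pos_fun_def by (metis complex_eq_iff less_eq_real_def one zero_complex.sel)
  then obtain d where d: "d > 0" and dd: "\<And>w. w \<in> S1 \<Longrightarrow> dist w 1 < d \<Longrightarrow> dist (f j w) (f j 1) < Re (f j 1)"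
    using pf one unfolding pos_fun_def continuous_on_iff by blast
  obtain tau where tau: "\<And>a b. a < n \<Longrightarrow> b < n \<Longrightarrow> t j a b = tau (int a - int b)"
    using pt unfolding pos_toeplitz_def toeplitz_def by blast
  have t11: "t j 1 1 = t j 0 0" using tau[of 1 1] tau[of 0 0] n by simp
  define p where "p = [: - t j 0 1, 2 * t j 0 0, - t j 1 0 :]"
  have "{w. w \<in> S1 \<and> dist w 1 < d} \<subseteq> {w. poly p w = 0}"
  proof safe
    fix w assume w: "w \<in> S1" and wd: "dist w 1 < d"
    have "f j w \<noteq> 0"
    proof
      assume "f j w = 0"
      then have "dist (f j w) (f j 1) = cmod (f j 1)" by (simp add: dist_norm)
      also have "\<dots> \<ge> Re (f j 1)" by (rule complex_Re_le_cmod)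
      finally show False using dd[OF w wd] by simp
    qed
    then have "Q (t j) w = 0" using zero[OF j w] by simp
    then have "w * Q (t j) w = 0" by simp
    moreover have "w * Q (t j) w = poly p w"
      unfolding Q_def p_def t11 using S1_cnj[OF w]
      by (simp add: algebra_simps power2_eq_square)
    ultimately show "poly p w = 0" by simp
  qed
  then have "infinite {w. poly p w = 0}" using S1_infinite[OF d] finite_subset by blast
  then have "p = 0" using poly_roots_finite by blast
  then show False using a0 unfolding p_def by simp
qed

theorem proposition7p6:
  fixes n :: nat
  assumes "n \<ge> 2"
  shows "pos_tensor n xi \<and> \<not> separable n xi"
  using xi_pos[OF assms] not_sep[OF assms] by blast

end
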